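(* Let $S_\alpha=(\mathrm{Id}_n+W_\alpha V_\alpha)\cdots(\mathrm{Id}_n+W_1V_1)Z$ for $1\le\alpha\le d$ and $k\ge1$. With the convention $\dot F=\{H,F\}$ and $H=\operatorname{tr}S_\alpha^k$, the vector field on $\mathcal M^\times_{n,d,q}$ induced by the quasi-Poisson bracket is $\dot X=-kXS_\alpha^k$, $\dot Z=k(S_\alpha^kZ-ZS_\alpha^k)$, $\dot V_\beta=-kV_\beta S_\alpha^k$ and $\dot W_\beta=kS_\alpha^kW_\beta$ for $\beta\le\alpha$, $\dot V_\beta=0$ and $\dot W_\beta=0$ for $\beta>\alpha$; moreover $\dot S_\alpha=0$.
   Context: Fix integers $n\ge1$, $d\ge1$ and $q\in\mathbb C^\times$ not a root of unity. Greek indices range over $\{1,\dots,d\}$; set $o(\alpha,\beta)=0$ if $\alpha=\beta$, $o(\alpha,\beta)=1$ if $\alpha<\beta$, $o(\alpha,\beta)=-1$ if $\alpha>\beta$. Let $\mathcal M^\times_{n,d,q}$ be the affine variety of tuples $(X,Z,V_1,\dots,V_d,W_1,\dots,W_d)$ with $X,Z\in\mathrm{GL}_n(\mathbb C)$, $V_\alpha\in\mathrm{Mat}_{1\times n}(\mathbb C)$, $W_\alpha\in\mathrm{Mat}_{n\times 1}(\mathbb C)$, such that every $\mathrm{Id}_n+W_\alpha V_\alpha$ is invertible and $XZX^{-1}Z^{-1}(\mathrm{Id}_n+W_1V_1)^{-1}\cdots(\mathrm{Id}_n+W_dV_d)^{-1}=q\,\mathrm{Id}_n$. Write $V_{\alpha,j}$,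 $W_{\alpha,k}$ for the entries. Let $\{-,-\}$ be the antisymmetric biderivation on functions of $(X,Z,V_\alpha,W_\alpha)$ (Van den Bergh's quasi-Poisson bracket) given by $\{X_{ij},X_{kl}\}=\tfrac12(\delta_{il}(X^2)_{kj}-\delta_{kj}(X^2)_{il})$, $\{Z_{ij},Z_{kl}\}=\tfrac12(\delta_{kj}(Z^2)_{il}-\delta_{il}(Z^2)_{kj})$, $\{X_{ij},Z_{kl}\}=\tfrac12((ZX)_{kj}\delta_{il}+\delta_{kj}(XZ)_{il}+Z_{kj}X_{il}-X_{kj}Z_{il})$, $\{U_{ij},W_{\alpha,k}\}=\tfrac12(\delta_{kj}(UW_\alpha)_i-U_{kj}W_{\alpha,i})$, $\{U_{ij},V_{\alpha,l}\}=\tfrac12((V_\alpha U)_j\delta_{il}-V_{\alpha,j}U_{il})$ for $U\in\{X,Z\}$, $\{V_{\alpha,j},V_{\beta,l}\}=\tfrac12 o(\beta,\alpha)(V_{\beta,j}V_{\alpha,l}+V_{\alpha,j}V_{\beta,l})$, $\{W_{\alpha,i},W_{\beta,k}\}=\tfrac12 o(\beta,\alpha)(W_{\beta,k}W_{\alpha,i}+W_{\alpha,k}W_{\beta,i})$, $\{V_{\alpha,j},W_{\beta,k}\}=\delta_{\alpha\beta}(\delta_{kj}+\tfrac12W_{\alpha,k}V_{\alpha,j}+\tfrac12\delta_{kj}V_\alpha W_\alpha)+\tfrac12 o(\alpha,\beta)(\delta_{kj}V_\alpha W_\beta+W_{\beta,k}V_{\alpha,j})$. The vector field of $H$ is $\dot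 M_{ij}=\{H,M_{ij}\}$ for each matrix entry $M_{ij}$. *)

theory Defs
  imports "HOL-Analysis.Analysis"
begin

text \<open>Coordinates on the space of tuples (X, Z, V_1..V_d, W_1..W_d).
  Matrix indices range over a finite type 'n (so n = CARD('n)); the quiver
  index alpha is a natural number in {1..d}.\<close>

datatype 'n coord = CX 'n 'n | CZ 'n 'n | CV nat 'n | CW nat 'n

type_synonym 'n point = "'n coord \<Rightarrow> complex"

definition coords :: "nat \<Rightarrow> ('n::finite) coord set" where
  "coords d = range (\<lambda>(i,j). CX i j) \<union> range (\<lambda>(i,j). CZ i j)
     \<union> (\<lambda>(a,j). CV a j) ` ({1..d} \<times> UNIV) \<union> (\<lambda>(a,j). CW a j) ` ({1..d} \<times> UNIV)"

definition Xm :: "('n::finite) point \<Rightarrow> complex^'n^'n" where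
  "Xm p = (\<chi> i j. p (CX i j))"
definition Zm :: "('n::finite) point \<Rightarrow> complex^'n^'n" where
  "Zm p = (\<chi> i j. p (CZ i j))"
text \<open>V_alpha is a row vector, W_alpha a column vector; both stored as complex^'n.\<close>
definition Vv :: "('n::finite) point \<Rightarrow> nat \<Rightarrow> complex^'n" where
  "Vv p a = (\<chi> j. p (CV a j))"
definition Wv :: "('n::finite) point \<Rightarrow> nat \<Rightarrow> complex^'n" where
  "Wv p a = (\<chi> i. p (CW a i))"

definition outer :: "complex^'n \<Rightarrow> complex^'n \<Rightarrow> complex^'n^'n" where
  "outer w v = (\<chi> i j. w$i * v$j)"
definition rowcol :: "complex^'n \<Rightarrow> complex^('n::finite) \<Rightarrow> complex" where
  "rowcol v w = (\<Sum>j\<in>UNIV. v$j * w$j)"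

definition Am :: "('n::finite) point \<Rightarrow> nat \<Rightarrow> complex^'n^'n" where
  "Am p a = mat 1 + outer (Wv p a) (Vv p a)"

fun mpow :: "complex^('n::finite)^'n \<Rightarrow> nat \<Rightarrow> complex^'n^'n" where
  "mpow A 0 = mat 1"
| "mpow A (Suc m) = A ** mpow A m"

fun Sm :: "('n::finite) point \<Rightarrow> nat \<Rightarrow> complex^'n^'n" where
  "Sm p 0 = Zm p"
| "Sm p (Suc a) = Am p (Suc a) ** Sm p a"

fun invprod :: "('n::finite) point \<Rightarrow> nat \<Rightarrow> complex^'n^'n" where
  "invprod p 0 = mat 1"
| "invprod p (Suc a) = invprod p a ** matrix_inv (Am p (Suc a))"

definition inM :: "nat \<Rightarrow> complex \<Rightarrow> ('n::finite) point \<Rightarrow> bool" where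
  "inM d q p \<longleftrightarrow> invertible (Xm p) \<and> invertible (Zm p)
     \<and> (\<forall>a\<in>{1..d}. invertible (Am p a))
     \<and> Xm p ** Zm p ** matrix_inv (Xm p) ** matrix_inv (Zm p) ** invprod p d = mat q"

definition ord_sign :: "nat \<Rightarrow> nat \<Rightarrow> complex" where
  "ord_sign a b = (if a = b then 0 else if a < b then 1 else -1)"

definition kd :: "'a \<Rightarrow> 'a \<Rightarrow> complex" where
  "kd x y = (if x = y then 1 else 0)"

fun br :: "('n::finite) coord \<Rightarrow> 'n coord \<Rightarrow> 'n point \<Rightarrow> complex" where
  "br (CX i j) (CX k l) p = (let X = Xm p in
      1/2 * (kd i l * (X**X)$k$j - kd k j * (X**X)$i$l))"
| "br (CZ i j) (CZ k l) p = (let Z = Zm p in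
      1/2 * (kd k j * (Z**Z)$i$l - kd i l * (Z**Z)$k$j))"
| "br (CX i j) (CZ k l) p = (let X = Xm p; Z = Zm p in
      1/2 * ((Z**X)$k$j * kd i l + kd k j * (X**Z)$i$l + Z$k$j * X$i$l - X$k$j * Z$i$l))"
| "br (CZ k l) (CX i j) p = (let X = Xm p; Z = Zm p in
      - (1/2 * ((Z**X)$k$j * kd i l + kd k j * (X**Z)$i$l + Z$k$j * X$i$l - X$k$j * Z$i$l)))"
| "br (CX i j) (CW a k) p = (let U = Xm p; W = Wv p a in
      1/2 * (kd k j * (U *v W)$i - U$k$j * W$i))"
| "br (CW a k) (CX i j) p = (let U = Xm p; W = Wv p a in
      - (1/2 * (kd k j * (U *v W)$i - U$k$j * W$i)))"
| "br (CZ i j) (CW a k) p = (let U = Zm p; W = Wv p a in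
      1/2 * (kd k j * (U *v W)$i - U$k$j * W$i))"
| "br (CW a k) (CZ i j) p = (let U = Zm p; W = Wv p a in
      - (1/2 * (kd k j * (U *v W)$i - U$k$j * W$i)))"
| "br (CX i j) (CV a l) p = (let U = Xm p; V = Vv p a in
      1/2 * ((V v* U)$j * kd i l - V$j * U$i$l))"
| "br (CV a l) (CX i j) p = (let U = Xm p; V = Vv p a in
      - (1/2 * ((V v* U)$j * kd i l - V$j * U$i$l)))"
| "br (CZ i j) (CV a l) p = (let U = Zm p; V = Vv p a in
      1/2 * ((V v* U)$j * kd i l - V$j * U$i$l))"
| "br (CV a l) (CZ i j) p = (let U = Zm p; V = Vv p a in
      - (1/2 * ((V v* U)$j * kd i l - V$j * U$i$l)))"
| "br (CV a j) (CV b l) p = (let Va = Vv p a; Vb = Vv p b in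
      1/2 * ord_sign b a * (Vb$j * Va$l + Va$j * Vb$l))"
| "br (CW a i) (CW b k) p = (let Wa = Wv p a; Wb = Wv p b in
      1/2 * ord_sign b a * (Wb$k * Wa$i + Wa$k * Wb$i))"
| "br (CV a j) (CW b k) p = (let Va = Vv p a; Wa = Wv p a; Wb = Wv p b in
      kd a b * (kd k j + 1/2 * Wa$k * Va$j + 1/2 * kd k j * rowcol Va Wa)
      + 1/2 * ord_sign a b * (kd k j * rowcol Va Wb + Wb$k * Va$j))"
| "br (CW b k) (CV a j) p = (let Va = Vv p a; Wa = Wv p a; Wb = Wv p b in
      - (kd a b * (kd k j + 1/2 * Wa$k * Va$j + 1/2 * kd k j * rowcol Va Wa)
      + 1/2 * ord_sign a b * (kd k j * rowcol Va Wb + Wb$k * Va$j)))"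

definition pd :: "('n point \<Rightarrow> complex) \<Rightarrow> 'n coord \<Rightarrow> 'n point \<Rightarrow> complex" where
  "pd F c p = deriv (\<lambda>t. F (p(c := t))) (p c)"

definition qpb :: "nat \<Rightarrow> ('n::finite point \<Rightarrow> complex) \<Rightarrow> ('n point \<Rightarrow> complex) \<Rightarrow> 'n point \<Rightarrow> complex" where
  "qpb d F G p = (\<Sum>c\<in>coords d. \<Sum>c'\<in>coords d. pd F c p * pd G c' p * br c c' p)"

end

theory Submission
  imports Defs
begin

definition mhd :: "(complex \<Rightarrow> complex^'n^'m) \<Rightarrow> complex^'n^'m \<Rightarrow> complex \<Rightarrow> bool" where
  "mhd F F' x \<longleftrightarrow> (\<forall>i j. ((\<lambda>t. F t $ i $ j) has_field_derivative F' $ i $ j) (at x))"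

lemma mhd_mult:
  fixes F :: "complex \<Rightarrow> complex^'n^'m" and G :: "complex \<Rightarrow> complex^'p^'n"
  assumes "mhd F F' x" "mhd G G' x"
  shows "mhd (\<lambda>t. F t ** G t) (F' ** G x + F x ** G') x"
  unfolding mhd_def
proof (intro allI)
  fix i j
  have "((\<lambda>t. \<Sum>k\<in>UNIV. F t $ i $ k * G t $ k $ j) has_field_derivative
        (\<Sum>k\<in>UNIV. F' $ i $ k * G x $ k $ j + F x $ i $ k * G' $ k $ j)) (at x)"
    apply (rule DERIV_sum)
    using assms unfolding mhd_def
    by (auto intro!: derivative_eq_intros)
  then show "((\<lambda>t. (F t ** G t) $ i $ j) has_field_derivative (F' ** G x + F x ** G') $ i $ j) (at x)"
    by (simp add: matrix_matrix_mult_def sum.distrib)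
qed

lemma mhd_const: "mhd (\<lambda>t. M) 0 x"
  by (simp add: mhd_def)

fun Dpow :: "complex^('n::finite)^'n \<Rightarrow> complex^'n^'n \<Rightarrow> nat \<Rightarrow> complex^'n^'n" where
  "Dpow M D 0 = 0"
| "Dpow M D (Suc m) = D ** mpow M m + M ** Dpow M D m"

lemma mhd_mpow:
  assumes "mhd F F' x"
  shows "mhd (\<lambda>t. mpow (F t) m) (Dpow (F x) F' m) x"
proof (induction m)
  case 0 then show ?case by (simp add: mhd_const)
next
  case (Suc m)
  from mhd_mult[OF assms Suc] show ?case by simp
qed

lemma mhd_trace:
  assumes "mhd F F' x"
  shows "((\<lambda>t. trace (F t)) has_field_derivative trace F') (at x)"
  unfolding trace_def
  apply (rule DERIV_sum)
  using assms unfolding mhd_def by auto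

lemma mpow_comm: "Q ** M = M ** Q \<Longrightarrow> Q ** mpow M m = mpow M m ** Q"
  by (induction m) (simp_all add: matrix_mul_assoc, metis matrix_mul_assoc)

lemma trace_Dpow_gen:
  assumes "Q ** M = M ** Q"
  shows "trace (Q ** Dpow M D m) = of_nat m * trace (Q ** mpow M (m - 1) ** D)"
  using assms
proof (induction m arbitrary: Q)
  case 0 then show ?case by (simp add: trace_def)
next
  case (Suc m)
  have c1: "(Q ** M) ** M = M ** (Q ** M)" using Suc.prems by (metis matrix_mul_assoc)
  have IH: "trace ((Q ** M) ** Dpow M D m) = of_nat m * trace ((Q ** M) ** mpow M (m - 1) ** D)"
    using Suc.IH[OF c1] .
  have t1: "trace (Q ** (D ** mpow M m)) = trace (Q ** mpow M m ** D)"
  proof -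
    have "trace (Q ** (D ** mpow M m)) = trace (mpow M m ** (Q ** D))"
      by (metis matrix_mul_assoc trace_mul_sym)
    also have "\<dots> = trace (Q ** mpow M m ** D)"
      using mpow_comm[OF Suc.prems, of m] by (metis matrix_mul_assoc)
    finally show ?thesis .
  qed
  show ?case
  proof (cases m)
    case 0 then show ?thesis using t1 by (simp add: matrix_add_ldistrib trace_add)
  next
    case (Suc m')
    have "(Q ** M) ** mpow M (m - 1) = Q ** mpow M m" using Suc by (simp add: matrix_mul_assoc)
    then show ?thesis using t1 IH
      by (simp add: matrix_add_ldistrib trace_add matrix_mul_assoc algebra_simps)
  qed
qed

lemma trace_Dpow: "trace (Dpow M D m) = of_nat m * trace (mpow M (m - 1) ** D)"
  using trace_Dpow_gen[of "mat 1" M D m] by simp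


definition dl :: "'a \<Rightarrow> 'a \<Rightarrow> complex" where "dl c = (\<lambda>c'. kd c' c)"

definition Zd :: "('n::finite coord \<Rightarrow> complex) \<Rightarrow> complex^'n^'n" where
  "Zd Y = (\<chi> i j. Y (CZ i j))"
definition Vd :: "('n::finite coord \<Rightarrow> complex) \<Rightarrow> nat \<Rightarrow> complex^'n" where
  "Vd Y b = (\<chi> j. Y (CV b j))"
definition Wd :: "('n::finite coord \<Rightarrow> complex) \<Rightarrow> nat \<Rightarrow> complex^'n" where
  "Wd Y b = (\<chi> j. Y (CW b j))"
definition Ad :: "'n::finite point \<Rightarrow> ('n coord \<Rightarrow> complex) \<Rightarrow> nat \<Rightarrow> complex^'n^'n" where
  "Ad p Y b = outer (Wd Y b) (Vv p b) + outer (Wv p b) (Vd Y b)"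

fun DS :: "'n::finite point \<Rightarrow> ('n coord \<Rightarrow> complex) \<Rightarrow> nat \<Rightarrow> complex^'n^'n" where
  "DS p Y 0 = Zd Y"
| "DS p Y (Suc b) = Ad p Y (Suc b) ** Sm p b + Am p (Suc b) ** DS p Y b"

lemma coord_deriv: "((\<lambda>t. (p(c:=t)) c') has_field_derivative kd c' c) (at x)"
  by (cases "c' = c") (auto simp: kd_def intro!: derivative_eq_intros)

lemma mhd_Zm: "mhd (\<lambda>t. Zm (p(c:=t))) (Zd (dl c)) x"
  unfolding mhd_def Zm_def Zd_def dl_def
  apply (intro allI) apply (simp only: vec_lambda_beta) by (rule coord_deriv)

lemma mhd_Am: "mhd (\<lambda>t. Am (p(c:=t)) b) (Ad p (dl c) b) (p c)"
  unfolding mhd_def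
proof (intro allI)
  fix i j
  have hW: "((\<lambda>t. (p(c:=t)) (CW b i)) has_field_derivative kd (CW b i) c) (at (p c))" by (rule coord_deriv)
  have hV: "((\<lambda>t. (p(c:=t)) (CV b j)) has_field_derivative kd (CV b j) c) (at (p c))" by (rule coord_deriv)
  have h: "((\<lambda>t. mat 1 $ i $ j + (p(c:=t)) (CW b i) * (p(c:=t)) (CV b j)) has_field_derivative
     0 + (kd (CW b i) c * (p(c:=p c)) (CV b j) + kd (CV b j) c * (p(c:=p c)) (CW b i))) (at (p c))"
    by (rule DERIV_add[OF DERIV_const DERIV_mult[OF hW hV]])
  have eq: "(\<lambda>t. Am (p(c:=t)) b $ i $ j) = (\<lambda>t. mat 1 $ i $ j + (p(c:=t)) (CW b i) * (p(c:=t)) (CV b j))"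
    by (simp add: Am_def outer_def Wv_def Vv_def)
  have eq2: "Ad p (dl c) b $ i $ j = 0 + (kd (CW b i) c * (p(c:=p c)) (CV b j) + kd (CV b j) c * (p(c:=p c)) (CW b i))"
    by (simp add: Ad_def outer_def Wv_def Vv_def Wd_def Vd_def dl_def algebra_simps)
  show "((\<lambda>t. Am (p(c := t)) b $ i $ j) has_field_derivative Ad p (dl c) b $ i $ j) (at (p c))"
    unfolding eq eq2 by (rule h)
qed

lemma mhd_Sm: "mhd (\<lambda>t. Sm (p(c:=t)) b) (DS p (dl c) b) (p c)"
proof (induction b)
  case 0 then show ?case by (simp only: DS.simps Sm.simps) (rule mhd_Zm)
next
  case (Suc b)
  from mhd_mult[OF mhd_Am[of p c "Suc b"] Suc] show ?case by (simp only: Sm.simps DS.simps fun_upd_triv)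
qed

lemma pd_H:
  "pd (\<lambda>x. trace (mpow (Sm x a) k)) c p = of_nat k * trace (mpow (Sm p a) (k - 1) ** DS p (dl c) a)"
proof -
  have "((\<lambda>t. trace (mpow (Sm (p(c:=t)) a) k)) has_field_derivative
     trace (Dpow (Sm (p(c:=p c)) a) (DS p (dl c) a) k)) (at (p c))"
    by (rule mhd_trace[OF mhd_mpow[OF mhd_Sm]])
  then show ?thesis unfolding pd_def by (simp add: DERIV_imp_deriv trace_Dpow)
qed

lemma pd_coord: "pd (\<lambda>x. x c0) c p = kd c0 c"
  unfolding pd_def using coord_deriv[of p c c0 "p c"] by (simp add: DERIV_imp_deriv)

lemma pd_S: "pd (\<lambda>x. Sm x a $ i $ j) c p = DS p (dl c) a $ i $ j"
  unfolding pd_def using mhd_Sm[of p c a] unfolding mhd_def by (simp add: DERIV_imp_deriv)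


lemma finite_coords: "finite (coords (d::nat) :: ('n::finite) coord set)"
  unfolding coords_def by auto

lemma in_coords:
  "CX i j \<in> coords d" "CZ i j \<in> coords d"
  "b \<in> {1..d} \<Longrightarrow> CV b j \<in> coords d" "b \<in> {1..d} \<Longrightarrow> CW b j \<in> coords d"
  unfolding coords_def by (auto simp: image_iff)

lemma sum_kd: "finite A \<Longrightarrow> x \<in> A \<Longrightarrow> (\<Sum>c\<in>A. f c * kd x c) = f x"
  by (simp add: kd_def if_distrib cong: if_cong)

lemma sum_kd': "finite A \<Longrightarrow> x \<in> A \<Longrightarrow> (\<Sum>c\<in>A. f c * kd c x) = f x"
  by (simp add: kd_def if_distrib cong: if_cong)

lemma Ad_lin:
  assumes "b \<in> {1..d}"
  shows "(\<Sum>c\<in>coords d. Y c * Ad p (dl c) b $ i $ r) = Ad p Y b $ i $ r"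
proof -
  have "(\<Sum>c\<in>coords d. Y c * Ad p (dl c) b $ i $ r)
     = (\<Sum>c\<in>coords d. Y c * kd (CW b i) c) * Vv p b $ r + Wv p b $ i * (\<Sum>c\<in>coords d. Y c * kd (CV b r) c)"
    by (simp add: Ad_def outer_def Wd_def Vd_def dl_def sum.distrib sum_distrib_left sum_distrib_right algebra_simps)
  also have "\<dots> = Ad p Y b $ i $ r"
    using assms by (simp add: sum_kd finite_coords in_coords Ad_def outer_def Wd_def Vd_def)
  finally show ?thesis .
qed

lemma DS_lin:
  "b \<le> d \<Longrightarrow> (\<Sum>c\<in>coords d. Y c * DS p (dl c) b $ i $ j) = DS p Y b $ i $ j"
proof (induction b arbitrary: i j)
  case 0
  then show ?case by (simp add: Zd_def dl_def sum_kd finite_coords in_coords)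
next
  case (Suc b)
  have IH: "\<And>r. (\<Sum>c\<in>coords d. Y c * DS p (dl c) b $ r $ j) = DS p Y b $ r $ j"
    using Suc by simp
  have AL: "\<And>r. (\<Sum>c\<in>coords d. Y c * Ad p (dl c) (Suc b) $ i $ r) = Ad p Y (Suc b) $ i $ r"
    using Suc.prems by (intro Ad_lin) auto
  have "(\<Sum>c\<in>coords d. Y c * DS p (dl c) (Suc b) $ i $ j)
      = (\<Sum>c\<in>coords d. \<Sum>r\<in>UNIV. Y c * Ad p (dl c) (Suc b) $ i $ r * Sm p b $ r $ j
          + Am p (Suc b) $ i $ r * (Y c * DS p (dl c) b $ r $ j))"
    by (simp add: matrix_matrix_mult_def sum_distrib_left sum.distrib algebra_simps)
  also have "\<dots> = (\<Sum>r\<in>UNIV. \<Sum>c\<in>coords d. Y c * Ad p (dl c) (Suc b) $ i $ r * Sm p b $ r $ j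
          + Am p (Suc b) $ i $ r * (Y c * DS p (dl c) b $ r $ j))"
    by (rule sum.swap)
  also have "\<dots> = (\<Sum>r\<in>UNIV. (\<Sum>c\<in>coords d. Y c * Ad p (dl c) (Suc b) $ i $ r) * Sm p b $ r $ j
          + Am p (Suc b) $ i $ r * (\<Sum>c\<in>coords d. Y c * DS p (dl c) b $ r $ j))"
    by (simp add: sum.distrib sum_distrib_left sum_distrib_right)
  also have "\<dots> = DS p Y (Suc b) $ i $ j"
    by (simp add: AL IH matrix_matrix_mult_def sum.distrib)
  finally show ?case .
qed

lemma trace_lin:
  fixes Y :: "'c \<Rightarrow> complex" and M :: "'c \<Rightarrow> complex^'n^'n" and G :: "complex^'n^'n"
  assumes "finite A" "\<And>i j. (\<Sum>c\<in>A. Y c * M c $ i $ j) = N $ i $ j"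
  shows "(\<Sum>c\<in>A. trace (G ** M c) * Y c) = trace (G ** N)"
proof -
  have "(\<Sum>c\<in>A. trace (G ** M c) * Y c) = (\<Sum>c\<in>A. \<Sum>i\<in>UNIV. \<Sum>r\<in>UNIV. G $ i $ r * (M c $ r $ i * Y c))"
    by (simp add: trace_def matrix_matrix_mult_def sum_distrib_right sum_distrib_left mult_ac)
  also have "\<dots> = (\<Sum>i\<in>UNIV. \<Sum>c\<in>A. \<Sum>r\<in>UNIV. G $ i $ r * (M c $ r $ i * Y c))"
    by (rule sum.swap)
  also have "\<dots> = (\<Sum>i\<in>UNIV. \<Sum>r\<in>UNIV. \<Sum>c\<in>A. G $ i $ r * (M c $ r $ i * Y c))"
    by (simp add: sum.swap[of _ A])
  also have "\<dots> = (\<Sum>i\<in>UNIV. \<Sum>r\<in>UNIV. G $ i $ r * N $ r $ i)"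
  proof -
    have a2: "(\<Sum>c\<in>A. M c $ i $ j * Y c) = N $ i $ j" for i j
    proof -
      have "(\<Sum>c\<in>A. M c $ i $ j * Y c) = (\<Sum>c\<in>A. Y c * M c $ i $ j)" by (rule sum.cong[OF refl], rule mult.commute)
      then show ?thesis using assms(2) by simp
    qed
    show ?thesis by (simp add: sum_distrib_left[symmetric] a2)
  qed
  also have "\<dots> = trace (G ** N)" by (simp add: trace_def matrix_matrix_mult_def)
  finally show ?thesis .
qed

lemma qpb_coord:
  fixes F :: "('n::finite) point \<Rightarrow> complex" and p :: "'n point"
  assumes "c0 \<in> coords d"
  shows "qpb d F (\<lambda>x. x c0) p = (\<Sum>c\<in>coords d. pd F c p * br c c0 p)"
  unfolding qpb_def pd_coord
proof (rule sum.cong[OF refl])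
  fix c :: "'n coord" assume "c \<in> coords d"
  have "(\<Sum>c'\<in>coords d. pd F c p * kd c0 c' * br c c' p) = (\<Sum>c'\<in>coords d. (pd F c p * br c c' p) * kd c0 c')"
    by (simp add: algebra_simps)
  also have "\<dots> = pd F c p * br c c0 p" using assms by (simp add: sum_kd finite_coords)
  finally show "(\<Sum>c'\<in>coords d. pd F c p * kd c0 c' * br c c' p) = pd F c p * br c c0 p" .
qed

lemma qpb_H_coord:
  assumes "a \<le> d" "c0 \<in> coords d"
  shows "qpb d (\<lambda>x. trace (mpow (Sm x a) k)) (\<lambda>x. x c0) p
     = of_nat k * trace (mpow (Sm p a) (k - 1) ** DS p (\<lambda>c. br c c0 p) a)"
proof -
  have "qpb d (\<lambda>x. trace (mpow (Sm x a) k)) (\<lambda>x. x c0) p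
      = (\<Sum>c\<in>coords d. of_nat k * (trace (mpow (Sm p a) (k - 1) ** DS p (dl c) a) * br c c0 p))"
    by (simp add: qpb_coord[OF assms(2)] pd_H mult.assoc)
  also have "\<dots> = of_nat k * (\<Sum>c\<in>coords d. trace (mpow (Sm p a) (k - 1) ** DS p (dl c) a) * br c c0 p)"
    by (simp add: sum_distrib_left)
  also have "\<dots> = of_nat k * trace (mpow (Sm p a) (k - 1) ** DS p (\<lambda>c. br c c0 p) a)"
  proof -
    have eq: "\<And>i j. (\<Sum>c\<in>coords d. br c c0 p * DS p (dl c) a $ i $ j) = DS p (\<lambda>c. br c c0 p) a $ i $ j"
      by (rule DS_lin[OF assms(1)])
    show ?thesis using trace_lin[OF finite_coords eq] by simp
  qed
  finally show ?thesis .
qed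

lemma qpb_H_S:
  fixes F :: "('n::finite) point \<Rightarrow> complex" and p :: "'n point"
  assumes "a \<le> d"
  shows "qpb d F (\<lambda>x. Sm x a $ i $ j) p = DS p (\<lambda>c'. \<Sum>c\<in>coords d. pd F c p * br c c' p) a $ i $ j"
proof -
  have "qpb d F (\<lambda>x. Sm x a $ i $ j) p
     = (\<Sum>c\<in>coords d. \<Sum>c'\<in>coords d. pd F c p * br c c' p * DS p (dl c') a $ i $ j)"
    unfolding qpb_def pd_S by (simp add: algebra_simps)
  also have "\<dots> = (\<Sum>c'\<in>coords d. \<Sum>c\<in>coords d. pd F c p * br c c' p * DS p (dl c') a $ i $ j)"
    by (rule sum.swap)
  also have "\<dots> = (\<Sum>c'\<in>coords d. (\<Sum>c\<in>coords d. pd F c p * br c c' p) * DS p (dl c') a $ i $ j)"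
    by (simp add: sum_distrib_right)
  also have "\<dots> = DS p (\<lambda>c'. \<Sum>c\<in>coords d. pd F c p * br c c' p) a $ i $ j"
    by (rule DS_lin[OF assms])
  finally show ?thesis .
qed


lemma mm_add_r: "((A::complex^'n^'m) + B) ** C = A ** C + B ** C"
  by (simp add: vec_eq_iff matrix_matrix_mult_def sum.distrib algebra_simps)
lemma mm_diff_l: "(A::complex^'n^'m) ** (B - C) = A ** B - A ** C"
  by (simp add: vec_eq_iff matrix_matrix_mult_def sum_subtractf algebra_simps)
lemma mm_diff_r: "((A::complex^'n^'m) - B) ** C = A ** C - B ** C"
  by (simp add: vec_eq_iff matrix_matrix_mult_def sum_subtractf algebra_simps)
lemma mat_mult_comp: "(mat c ** (M::complex^'n^'m)) $ i $ j = c * M $ i $ j"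
  by (simp add: matrix_matrix_mult_def mat_def if_distrib[of "\<lambda>x. x * y" for y] cong: if_cong)
lemma mult_mat_comp: "((M::complex^'n^'m) ** mat c) $ i $ j = M $ i $ j * c"
  by (simp add: matrix_matrix_mult_def mat_def if_distrib[of "\<lambda>x. y * x" for y] cong: if_cong)
lemma mat_comm: "(M::complex^'n^'n) ** mat c = mat c ** M"
  by (simp add: vec_eq_iff mat_mult_comp mult_mat_comp mult.commute)

fun Pm :: "'n::finite point \<Rightarrow> nat \<Rightarrow> complex^'n^'n" where
  "Pm p 0 = mat 1"
| "Pm p (Suc b) = Am p (Suc b) ** Pm p b"

lemma Sm_Pm: "Sm p b = Pm p b ** Zm p"
  by (induction b) (simp_all add: matrix_mul_assoc)

lemma telescope:
  assumes "\<forall>b\<in>{1..a}. Ad p Y b = Kf b ** Am p b - Am p b ** Kf (b - 1)"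
  shows "DS p Y a = Kf a ** Sm p a + Pm p a ** (Zd Y - Kf 0 ** Zm p)"
  using assms
proof (induction a)
  case 0 then show ?case by simp
next
  case (Suc b)
  let ?M = "Zd Y - Kf 0 ** Zm p"
  have IH: "DS p Y b = Kf b ** Sm p b + Pm p b ** ?M" using Suc by auto
  have Ad: "Ad p Y (Suc b) = Kf (Suc b) ** Am p (Suc b) - Am p (Suc b) ** Kf b"
    using Suc.prems by auto
  have "DS p Y (Suc b) = (Kf (Suc b) ** Am p (Suc b) - Am p (Suc b) ** Kf b) ** Sm p b
      + Am p (Suc b) ** (Kf b ** Sm p b + Pm p b ** ?M)" by (simp add: IH Ad)
  also have "\<dots> = Kf (Suc b) ** (Am p (Suc b) ** Sm p b) + (Am p (Suc b) ** Pm p b) ** ?M"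
    by (simp add: mm_diff_r matrix_add_ldistrib matrix_mul_assoc)
  finally show ?case by simp
qed


lemma outer_comp[simp]: "outer u v $ r $ l = u $ r * v $ l" by (simp add: outer_def)
lemma outer_mm_comp[simp]: "(outer a b ** M) $ r $ l = a $ r * (b v* M) $ l"
  by (simp add: outer_def matrix_matrix_mult_def vector_matrix_mult_def sum_distrib_left mult.assoc)
lemma mm_outer_comp[simp]: "(M ** outer a b) $ r $ l = (M *v a) $ r * b $ l"
  by (simp add: outer_def matrix_matrix_mult_def matrix_vector_mult_def sum_distrib_right mult.assoc)
lemma vm_outer[simp]: "b v* outer c d = rowcol b c *s d"
  by (simp add: vec_eq_iff outer_def vector_matrix_mult_def rowcol_def sum_distrib_right sum_distrib_left mult_ac)
lemma mv_outer[simp]: "outer c d *v a = rowcol d a *s c"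
  by (simp add: vec_eq_iff outer_def matrix_vector_mult_def rowcol_def sum_distrib_left mult_ac)
lemma rowcol_smult_l[simp]: "rowcol (c *s v) w = c * rowcol v w"
  by (simp add: rowcol_def sum_distrib_left mult_ac)
lemma rowcol_smult_r[simp]: "rowcol v (c *s w) = c * rowcol v w"
  by (simp add: rowcol_def sum_distrib_left mult_ac)
lemma rowcol_add_l[simp]: "rowcol (v + v') w = rowcol v w + rowcol v' w"
  by (simp add: rowcol_def sum.distrib algebra_simps)
lemma rowcol_add_r[simp]: "rowcol v (w + w') = rowcol v w + rowcol v w'"
  by (simp add: rowcol_def sum.distrib algebra_simps)
lemma rowcol_axis_vm[simp]: "rowcol (axis i 1 v* X) W = (X *v W) $ i"
  by (simp add: rowcol_def axis_def vector_matrix_mult_def matrix_vector_mult_def if_distrib[of "\<lambda>x. x * y" for y] cong: if_cong)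
lemma rowcol_mv_axis[simp]: "rowcol V (X *v axis j 1) = (V v* X) $ j"
  by (simp add: rowcol_def axis_def vector_matrix_mult_def matrix_vector_mult_def if_distrib[of "\<lambda>x. y * x" for y] cong: if_cong)
lemma rowcol_axis_l[simp]: "rowcol (axis i 1) w = w $ i"
  by (simp add: rowcol_def axis_def if_distrib[of "\<lambda>x. x * y" for y] cong: if_cong)
lemma rowcol_axis_r[simp]: "rowcol v (axis j 1) = v $ j"
  by (simp add: rowcol_def axis_def if_distrib[of "\<lambda>x. y * x" for y] cong: if_cong)
lemma mv_axis[simp]: "(X *v axis j 1) $ r = X $ r $ j"
  by (simp add: axis_def matrix_vector_mult_def if_distrib[of "\<lambda>x. y * x" for y] cong: if_cong)
lemma vm_axis[simp]: "(axis i 1 v* X) $ l = X $ i $ l"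
  by (simp add: axis_def vector_matrix_mult_def if_distrib[of "\<lambda>x. x * y" for y] cong: if_cong)

lemma mv_add[simp]: "((A::complex^'n^'m) + B) *v w = A *v w + B *v w"
  by (simp add: vec_eq_iff matrix_vector_mult_def sum.distrib algebra_simps)
lemma vm_add[simp]: "v v* ((A::complex^'n^'m) + B) = v v* A + v v* B"
  by (simp add: vec_eq_iff vector_matrix_mult_def sum.distrib algebra_simps)
lemma mv_diff[simp]: "((A::complex^'n^'m) - B) *v w = A *v w - B *v w"
  by (simp add: vec_eq_iff matrix_vector_mult_def sum_subtractf algebra_simps)
lemma vm_diff[simp]: "v v* ((A::complex^'n^'m) - B) = v v* A - v v* B"
  by (simp add: vec_eq_iff vector_matrix_mult_def sum_subtractf algebra_simps)
lemma rowcol_neg_l[simp]: "rowcol (- v) w = - rowcol v w"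
  by (simp add: rowcol_def sum_negf)
lemma rowcol_neg_r[simp]: "rowcol v (- w) = - rowcol v w"
  by (simp add: rowcol_def sum_negf)
lemma axis_comp: "axis j (1::complex) $ r = kd r j"
  by (simp add: axis_def kd_def)

lemmas distr = matrix_add_ldistrib mm_add_r mm_diff_l mm_diff_r

definition KX :: "'n::finite point \<Rightarrow> 'n \<Rightarrow> 'n \<Rightarrow> complex^'n^'n" where
  "KX p i j = outer (axis j 1) ((-1/2) *s (axis i 1 v* Xm p)) + outer ((1/2) *s (Xm p *v axis j 1)) (axis i 1)"

lemma Ad_CX: "Ad p (\<lambda>c. br c (CX i j) p) b = KX p i j ** Am p b - Am p b ** KX p i j"
  apply (simp add: vec_eq_iff Am_def KX_def distr)
  apply (simp add: Ad_def Wd_def Vd_def Let_def axis_comp)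
  by (auto simp: kd_def field_simps)


lemma mv_neg[simp]: "(M::complex^'n^'m) *v (- v) = - (M *v v)"
  by (simp add: vec_eq_iff matrix_vector_mult_def sum_negf)
lemma vm_neg[simp]: "(- v) v* (M::complex^'n^'m) = - (v v* M)"
  by (simp add: vec_eq_iff vector_matrix_mult_def sum_negf)

lemmas sc = vector_scalar_commute scalar_vector_matrix_assoc matrix_vector_mul_assoc vector_matrix_mul_assoc

definition KU :: "complex^'n^'n \<Rightarrow> 'n::finite \<Rightarrow> 'n \<Rightarrow> complex^'n^'n" where
  "KU U i j = outer (axis j 1) ((-1/2) *s (axis i 1 v* U)) + outer ((1/2) *s (U *v axis j 1)) (axis i 1)"
definition NX :: "'n::finite point \<Rightarrow> 'n \<Rightarrow> 'n \<Rightarrow> complex^'n^'n" where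
  "NX p i j = outer ((-1/2) *s (Xm p *v axis j 1)) (axis i 1) + outer ((-1/2) *s axis j 1) (axis i 1 v* Xm p)"
definition NZ :: "'n::finite point \<Rightarrow> 'n \<Rightarrow> 'n \<Rightarrow> complex^'n^'n" where
  "NZ p i j = outer ((1/2) *s (Zm p *v axis j 1)) (axis i 1) + outer ((-1/2) *s axis j 1) (axis i 1 v* Zm p)"
definition KVf :: "'n::finite point \<Rightarrow> nat \<Rightarrow> 'n \<Rightarrow> nat \<Rightarrow> complex^'n^'n" where
  "KVf p b0 j b = outer ((if b < b0 then 1/2 else -1/2) *s axis j 1) (Vv p b0)"
definition KWf :: "'n::finite point \<Rightarrow> nat \<Rightarrow> 'n \<Rightarrow> nat \<Rightarrow> complex^'n^'n" where
  "KWf p b0 i b = outer ((if b < b0 then -1/2 else 1/2) *s Wv p b0) (axis i 1)"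

lemma Ad_CZ: "Ad p (\<lambda>c. br c (CZ i j) p) b = KU (Zm p) i j ** Am p b - Am p b ** KU (Zm p) i j"
  apply (simp add: vec_eq_iff Am_def KU_def distr)
  apply (simp add: Ad_def Wd_def Vd_def Let_def axis_comp sc)
  by (auto simp: kd_def field_simps)

lemma Ad_CX': "Ad p (\<lambda>c. br c (CX i j) p) b = KU (Xm p) i j ** Am p b - Am p b ** KU (Xm p) i j"
  apply (simp add: vec_eq_iff Am_def KU_def distr)
  apply (simp add: Ad_def Wd_def Vd_def Let_def axis_comp sc)
  by (auto simp: kd_def field_simps)

lemma Ad_CV:
  assumes "b \<ge> 1" "b0 \<ge> 1"
  shows "Ad p (\<lambda>c. br c (CV b0 j) p) b = KVf p b0 j b ** Am p b - Am p b ** KVf p b0 j (b - 1)"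
proof (cases "b < b0")
  case True
  then show ?thesis
    apply (simp add: vec_eq_iff Am_def KVf_def distr)
    apply (simp add: Ad_def Wd_def Vd_def Let_def axis_comp sc ord_sign_def)
    by (auto simp: kd_def field_simps)
next
  case False
  then consider "b = b0" | "b > b0" by linarith
  then show ?thesis
  proof cases
    case 1
    then show ?thesis using assms
      apply (simp add: vec_eq_iff Am_def KVf_def distr)
      apply (simp add: Ad_def Wd_def Vd_def Let_def axis_comp sc ord_sign_def)
      by (auto simp: kd_def field_simps)
  next
    case 2
    then show ?thesis using assms
      apply (simp add: vec_eq_iff Am_def KVf_def distr)
      apply (simp add: Ad_def Wd_def Vd_def Let_def axis_comp sc ord_sign_def)
      by (auto simp: kd_def field_simps)
  qed
qed

lemma Ad_CW:
  assumes "b \<ge> 1" "b0 \<ge> 1"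
  shows "Ad p (\<lambda>c. br c (CW b0 i) p) b = KWf p b0 i b ** Am p b - Am p b ** KWf p b0 i (b - 1)"
proof (cases "b < b0")
  case True
  then show ?thesis
    apply (simp add: vec_eq_iff Am_def KWf_def distr)
    apply (simp add: Ad_def Wd_def Vd_def Let_def axis_comp sc ord_sign_def)
    by (auto simp: kd_def field_simps)
next
  case False
  then consider "b = b0" | "b > b0" by linarith
  then show ?thesis
  proof cases
    case 1
    then show ?thesis using assms
      apply (simp add: vec_eq_iff Am_def KWf_def distr)
      apply (simp add: Ad_def Wd_def Vd_def Let_def axis_comp sc ord_sign_def)
      by (auto simp: kd_def field_simps)
  next
    case 2
    then show ?thesis using assms
      apply (simp add: vec_eq_iff Am_def KWf_def distr)
      apply (simp add: Ad_def Wd_def Vd_def Let_def axis_comp sc ord_sign_def)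
      by (auto simp: kd_def field_simps)
  qed
qed

lemma Zd_CX: "Zd (\<lambda>c. br c (CX i j) p) - KU (Xm p) i j ** Zm p = Zm p ** NX p i j"
  apply (simp add: vec_eq_iff KU_def NX_def distr)
  apply (simp add: Zd_def Let_def axis_comp sc)
  by (auto simp: kd_def field_simps)

lemma Zd_CZ: "Zd (\<lambda>c. br c (CZ i j) p) - KU (Zm p) i j ** Zm p = Zm p ** NZ p i j"
  apply (simp add: vec_eq_iff KU_def NZ_def distr)
  apply (simp add: Zd_def Let_def axis_comp sc)
  by (auto simp: kd_def field_simps)

lemma Zd_CV: "b0 \<ge> 1 \<Longrightarrow> Zd (\<lambda>c. br c (CV b0 j) p) - KVf p b0 j 0 ** Zm p = Zm p ** outer ((-1/2) *s axis j 1) (Vv p b0)"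
  apply (simp add: vec_eq_iff KVf_def distr)
  apply (simp add: Zd_def Let_def axis_comp sc)
  by (auto simp: kd_def field_simps)

lemma Zd_CW: "b0 \<ge> 1 \<Longrightarrow> Zd (\<lambda>c. br c (CW b0 i) p) - KWf p b0 i 0 ** Zm p = Zm p ** outer ((1/2) *s Wv p b0) (axis i 1)"
  apply (simp add: vec_eq_iff KWf_def distr)
  apply (simp add: Zd_def Let_def axis_comp sc)
  by (auto simp: kd_def field_simps)


lemma DS_final:
  assumes "\<forall>b\<in>{1..a}. Ad p Y b = Kf b ** Am p b - Am p b ** Kf (b - 1)"
    and "Zd Y - Kf 0 ** Zm p = Zm p ** N"
  shows "DS p Y a = Kf a ** Sm p a + Sm p a ** N"
  using telescope[OF assms(1)] assms(2) Sm_Pm[of p a] by (simp add: matrix_mul_assoc)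

lemma mpow_Suc_right: "mpow S (Suc m) = mpow S m ** S"
  using mpow_comm[of S S m] by simp

lemma trace_final:
  assumes "k \<ge> 1"
  shows "trace (mpow S (k - 1) ** (K ** S + S ** N)) = trace (mpow S k ** K) + trace (mpow S k ** N)"
proof -
  obtain m where k: "k = Suc m" using assms by (cases k) auto
  have t1: "trace (mpow S m ** (K ** S)) = trace (mpow S k ** K)"
  proof -
    have "trace (mpow S m ** (K ** S)) = trace (S ** (mpow S m ** K))"
      by (metis matrix_mul_assoc trace_mul_sym)
    also have "\<dots> = trace (mpow S k ** K)" using k by (simp add: matrix_mul_assoc)
    finally show ?thesis .
  qed
  have t2: "trace (mpow S m ** (S ** N)) = trace (mpow S k ** N)"
    using k mpow_comm[of S S m] by (simp add: matrix_mul_assoc)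
  show ?thesis using k t1 t2 by (simp add: matrix_add_ldistrib trace_add)
qed

lemma trace_outer[simp]: "trace (T ** outer w v) = rowcol v (T *v w)"
  by (simp add: trace_def rowcol_def mult.commute)

lemma trace_addm[simp]: "trace ((A::complex^'n^'n) + B) = trace A + trace B"
  by (rule trace_add)

lemma mat_mv[simp]: "(mat c ** (M::complex^'n^'n)) *v w = c *s (M *v w)"
  by (simp add: vec_eq_iff matrix_vector_mult_def mat_mult_comp sum_distrib_left mult.assoc)
lemma mat_vm[simp]: "v v* (mat c ** (M::complex^'n^'n)) = c *s (v v* M)"
  by (simp add: vec_eq_iff vector_matrix_mult_def mat_mult_comp sum_distrib_left mult_ac)

lemma tr_CX: "trace (T ** KU (Xm p) i j) + trace (T ** NX p i j) = - (Xm p ** T) $ i $ j"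
  by (simp add: KU_def NX_def distr sc field_simps)

lemma partX:
  assumes "a \<le> d" "k \<ge> 1"
  shows "qpb d (\<lambda>x. trace (mpow (Sm x a) k)) (\<lambda>x. x (CX i j)) p = - of_nat k * (Xm p ** mpow (Sm p a) k) $ i $ j"
proof -
  have DS: "DS p (\<lambda>c. br c (CX i j) p) a = KU (Xm p) i j ** Sm p a + Sm p a ** NX p i j"
    by (rule DS_final) (simp_all add: Ad_CX' Zd_CX)
  have "qpb d (\<lambda>x. trace (mpow (Sm x a) k)) (\<lambda>x. x (CX i j)) p
      = of_nat k * trace (mpow (Sm p a) (k - 1) ** DS p (\<lambda>c. br c (CX i j) p) a)"
    by (rule qpb_H_coord[OF assms(1) in_coords(1)])
  also have "\<dots> = of_nat k * (trace (mpow (Sm p a) k ** KU (Xm p) i j) + trace (mpow (Sm p a) k ** NX p i j))"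
    unfolding DS trace_final[OF assms(2)] ..
  finally show ?thesis by (simp add: tr_CX)
qed

lemma tr_CZ: "trace (T ** KU (Zm p) i j) + trace (T ** NZ p i j) = (T ** Zm p) $ i $ j - (Zm p ** T) $ i $ j"
  by (simp add: KU_def NZ_def distr sc field_simps)

lemma partZ:
  assumes "a \<le> d" "k \<ge> 1"
  shows "qpb d (\<lambda>x. trace (mpow (Sm x a) k)) (\<lambda>x. x (CZ i j)) p
     = of_nat k * ((mpow (Sm p a) k ** Zm p) $ i $ j - (Zm p ** mpow (Sm p a) k) $ i $ j)"
proof -
  have DS: "DS p (\<lambda>c. br c (CZ i j) p) a = KU (Zm p) i j ** Sm p a + Sm p a ** NZ p i j"
    by (rule DS_final) (simp_all add: Ad_CZ Zd_CZ)
  have "qpb d (\<lambda>x. trace (mpow (Sm x a) k)) (\<lambda>x. x (CZ i j)) p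
      = of_nat k * trace (mpow (Sm p a) (k - 1) ** DS p (\<lambda>c. br c (CZ i j) p) a)"
    by (rule qpb_H_coord[OF assms(1) in_coords(2)])
  also have "\<dots> = of_nat k * (trace (mpow (Sm p a) k ** KU (Zm p) i j) + trace (mpow (Sm p a) k ** NZ p i j))"
    unfolding DS trace_final[OF assms(2)] ..
  finally show ?thesis by (simp add: tr_CZ)
qed

lemma tr_V: "trace (T ** KVf p b j a) + trace (T ** outer ((-1/2) *s axis j 1) (Vv p b))
   = (if b \<le> a then - (Vv p b v* T) $ j else 0)"
  by (auto simp: KVf_def sc field_simps)

lemma partV:
  assumes "a \<le> d" "k \<ge> 1" "b \<in> {1..d}"
  shows "qpb d (\<lambda>x. trace (mpow (Sm x a) k)) (\<lambda>x. x (CV b j)) p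
     = of_nat k * (if b \<le> a then - (Vv p b v* mpow (Sm p a) k) $ j else 0)"
proof -
  have DS: "DS p (\<lambda>c. br c (CV b j) p) a = KVf p b j a ** Sm p a + Sm p a ** outer ((-1/2) *s axis j 1) (Vv p b)"
    using assms(3) by (intro DS_final) (simp_all add: Ad_CV Zd_CV)
  have "qpb d (\<lambda>x. trace (mpow (Sm x a) k)) (\<lambda>x. x (CV b j)) p
      = of_nat k * trace (mpow (Sm p a) (k - 1) ** DS p (\<lambda>c. br c (CV b j) p) a)"
    by (rule qpb_H_coord[OF assms(1) in_coords(3)[OF assms(3)]])
  also have "\<dots> = of_nat k * (trace (mpow (Sm p a) k ** KVf p b j a) + trace (mpow (Sm p a) k ** outer ((-1/2) *s axis j 1) (Vv p b)))"
    unfolding DS trace_final[OF assms(2)] ..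
  finally show ?thesis by (simp only: tr_V)
qed

lemma tr_W: "trace (T ** KWf p b i a) + trace (T ** outer ((1/2) *s Wv p b) (axis i 1))
   = (if b \<le> a then (T *v Wv p b) $ i else 0)"
  by (auto simp: KWf_def sc field_simps)

lemma partW:
  assumes "a \<le> d" "k \<ge> 1" "b \<in> {1..d}"
  shows "qpb d (\<lambda>x. trace (mpow (Sm x a) k)) (\<lambda>x. x (CW b i)) p
     = of_nat k * (if b \<le> a then (mpow (Sm p a) k *v Wv p b) $ i else 0)"
proof -
  have DS: "DS p (\<lambda>c. br c (CW b i) p) a = KWf p b i a ** Sm p a + Sm p a ** outer ((1/2) *s Wv p b) (axis i 1)"
    using assms(3) by (intro DS_final) (simp_all add: Ad_CW Zd_CW)
  have "qpb d (\<lambda>x. trace (mpow (Sm x a) k)) (\<lambda>x. x (CW b i)) p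
      = of_nat k * trace (mpow (Sm p a) (k - 1) ** DS p (\<lambda>c. br c (CW b i) p) a)"
    by (rule qpb_H_coord[OF assms(1) in_coords(4)[OF assms(3)]])
  also have "\<dots> = of_nat k * (trace (mpow (Sm p a) k ** KWf p b i a) + trace (mpow (Sm p a) k ** outer ((1/2) *s Wv p b) (axis i 1)))"
    unfolding DS trace_final[OF assms(2)] ..
  finally show ?thesis by (simp only: tr_W)
qed


lemma mat_mm_l: "(mat c ** (T::complex^'n^'n)) ** M = mat c ** (T ** M)"
  by (simp add: matrix_mul_assoc)
lemma mat_mm_r: "(M::complex^'n^'n) ** (mat c ** T) = mat c ** (M ** T)"
  by (metis mat_comm matrix_mul_assoc)

lemma partS:
  fixes F :: "('n::finite) coord \<Rightarrow> complex"
  assumes T: "T = mpow (Sm p a) k"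
    and hZ: "\<forall>r l. F (CZ r l) = of_nat k * ((T ** Zm p) $ r $ l - (Zm p ** T) $ r $ l)"
    and hV: "\<forall>b\<in>{1..a}. \<forall>l. F (CV b l) = - of_nat k * (Vv p b v* T) $ l"
    and hW: "\<forall>b\<in>{1..a}. \<forall>r. F (CW b r) = of_nat k * (T *v Wv p b) $ r"
  shows "DS p F a = 0"
proof -
  have Ad: "\<forall>b\<in>{1..a}. Ad p F b = (\<lambda>_. mat (of_nat k) ** T) b ** Am p b - Am p b ** (\<lambda>_. mat (of_nat k) ** T) (b - 1)"
  proof
    fix b assume b: "b \<in> {1..a}"
    show "Ad p F b = (\<lambda>_. mat (of_nat k) ** T) b ** Am p b - Am p b ** (\<lambda>_. mat (of_nat k) ** T) (b - 1)"
      using hV b hW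
      by (simp add: vec_eq_iff Am_def distr Ad_def Wd_def Vd_def mat_mult_comp algebra_simps)
  qed
  have Zd: "Zd F - (\<lambda>_. mat (of_nat k) ** T) 0 ** Zm p = Zm p ** (mat (- of_nat k) ** T)"
    using hZ by (simp add: vec_eq_iff Zd_def mat_mm_l mat_mm_r mat_mult_comp algebra_simps)
  have comm: "T ** Sm p a = Sm p a ** T" using mpow_comm[of "Sm p a" "Sm p a" k] T by simp
  show ?thesis
    using DS_final[OF Ad Zd] comm
    by (simp add: vec_eq_iff mat_mm_l mat_mm_r mat_mult_comp)
qed


theorem mainTheorem15:
  fixes d k a :: nat and q :: complex and p :: "('n::finite) point"
  assumes hd: "d \<ge> 1"
    and hq: "q \<noteq> 0" and hroot: "\<forall>m::nat. m \<ge> 1 \<longrightarrow> q ^ m \<noteq> 1"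
    and ha: "a \<in> {1..d}" and hk: "k \<ge> 1"
    and hp: "inM d q p"
  defines "H \<equiv> (\<lambda>x. trace (mpow (Sm x a) k))"
  defines "SK \<equiv> mpow (Sm p a) k"
  shows "(\<forall>i j. qpb d H (\<lambda>x. x (CX i j)) p = - of_nat k * (Xm p ** SK)$i$j)
       \<and> (\<forall>i j. qpb d H (\<lambda>x. x (CZ i j)) p = of_nat k * ((SK ** Zm p)$i$j - (Zm p ** SK)$i$j))
       \<and> (\<forall>b\<in>{1..d}. \<forall>j. b \<le> a \<longrightarrow> qpb d H (\<lambda>x. x (CV b j)) p = - of_nat k * (Vv p b v* SK)$j)
       \<and> (\<forall>b\<in>{1..d}. \<forall>i. b \<le> a \<longrightarrow> qpb d H (\<lambda>x. x (CW b i)) p = of_nat k * (SK *v Wv p b)$i)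
       \<and> (\<forall>b\<in>{1..d}. \<forall>j. a < b \<longrightarrow> qpb d H (\<lambda>x. x (CV b j)) p = 0)
       \<and> (\<forall>b\<in>{1..d}. \<forall>i. a < b \<longrightarrow> qpb d H (\<lambda>x. x (CW b i)) p = 0)
       \<and> (\<forall>i j. qpb d H (\<lambda>x. Sm x a $ i $ j) p = 0)"
proof -
  have ad: "a \<le> d" using ha by simp
  have SKe: "SK = mpow (Sm p a) k" by (simp add: SK_def)
  have P1: "\<forall>i j. qpb d H (\<lambda>x. x (CX i j)) p = - of_nat k * (Xm p ** SK)$i$j"
    unfolding H_def SK_def using partX[OF ad hk] by blast
  have P2: "\<forall>i j. qpb d H (\<lambda>x. x (CZ i j)) p = of_nat k * ((SK ** Zm p)$i$j - (Zm p ** SK)$i$j)"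
    unfolding H_def SK_def using partZ[OF ad hk] by blast
  have P3: "\<forall>b\<in>{1..d}. \<forall>j. b \<le> a \<longrightarrow> qpb d H (\<lambda>x. x (CV b j)) p = - of_nat k * (Vv p b v* SK)$j"
  proof (intro ballI allI impI)
    fix b j assume bd: "b \<in> {1..d}" and c: "b \<le> a"
    show "qpb d H (\<lambda>x. x (CV b j)) p = - of_nat k * (Vv p b v* SK)$j"
      unfolding H_def SK_def using partV[OF ad hk bd, of j p] c by simp
  qed
  have P4: "\<forall>b\<in>{1..d}. \<forall>i. b \<le> a \<longrightarrow> qpb d H (\<lambda>x. x (CW b i)) p = of_nat k * (SK *v Wv p b)$i"
  proof (intro ballI allI impI)
    fix b i assume bd: "b \<in> {1..d}" and c: "b \<le> a"
    show "qpb d H (\<lambda>x. x (CW b i)) p = of_nat k * (SK *v Wv p b)$i"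
      unfolding H_def SK_def using partW[OF ad hk bd, of i p] c by simp
  qed
  have P5: "\<forall>b\<in>{1..d}. \<forall>j. a < b \<longrightarrow> qpb d H (\<lambda>x. x (CV b j)) p = 0"
  proof (intro ballI allI impI)
    fix b j assume bd: "b \<in> {1..d}" and c: "a < b"
    show "qpb d H (\<lambda>x. x (CV b j)) p = 0"
      unfolding H_def SK_def using partV[OF ad hk bd, of j p] c by simp
  qed
  have P6: "\<forall>b\<in>{1..d}. \<forall>i. a < b \<longrightarrow> qpb d H (\<lambda>x. x (CW b i)) p = 0"
  proof (intro ballI allI impI)
    fix b i assume bd: "b \<in> {1..d}" and c: "a < b"
    show "qpb d H (\<lambda>x. x (CW b i)) p = 0"
      unfolding H_def SK_def using partW[OF ad hk bd, of i p] c by simp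
  qed
  define F where "F = (\<lambda>c'. \<Sum>c\<in>coords d. pd H c p * br c c' p)"
  have FC: "c' \<in> coords d \<Longrightarrow> F c' = qpb d H (\<lambda>x. x c') p" for c'
    unfolding F_def by (simp add: qpb_coord)
  have DS0: "DS p F a = 0"
  proof (rule partS[OF SKe])
    show "\<forall>r l. F (CZ r l) = of_nat k * ((SK ** Zm p) $ r $ l - (Zm p ** SK) $ r $ l)"
    proof (intro allI)
      fix r l
      have "F (CZ r l) = qpb d H (\<lambda>x. x (CZ r l)) p" by (rule FC[OF in_coords(2)])
      also have "\<dots> = of_nat k * ((SK ** Zm p) $ r $ l - (Zm p ** SK) $ r $ l)" using P2 by blast
      finally show "F (CZ r l) = of_nat k * ((SK ** Zm p) $ r $ l - (Zm p ** SK) $ r $ l)" .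
    qed
    show "\<forall>b\<in>{1..a}. \<forall>l. F (CV b l) = - of_nat k * (Vv p b v* SK) $ l"
    proof (intro ballI allI)
      fix b l assume b: "b \<in> {1..a}"
      then have bd: "b \<in> {1..d}" using ad by auto
      show "F (CV b l) = - of_nat k * (Vv p b v* SK) $ l"
      proof -
        have "F (CV b l) = qpb d H (\<lambda>x. x (CV b l)) p" by (rule FC[OF in_coords(3)[OF bd]])
        also have "\<dots> = - of_nat k * (Vv p b v* SK) $ l" using P3 bd b by auto
        finally show ?thesis .
      qed
    qed
    show "\<forall>b\<in>{1..a}. \<forall>r. F (CW b r) = of_nat k * (SK *v Wv p b) $ r"
    proof (intro ballI allI)
      fix b r assume b: "b \<in> {1..a}"
      then have bd: "b \<in> {1..d}" using ad by auto
      show "F (CW b r) = of_nat k * (SK *v Wv p b) $ r"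
      proof -
        have "F (CW b r) = qpb d H (\<lambda>x. x (CW b r)) p" by (rule FC[OF in_coords(4)[OF bd]])
        also have "\<dots> = of_nat k * (SK *v Wv p b) $ r" using P4 bd b by auto
        finally show ?thesis .
      qed
    qed
  qed
  have P7: "\<forall>i j. qpb d H (\<lambda>x. Sm x a $ i $ j) p = 0"
    using qpb_H_S[OF ad, where F=H and p=p] DS0 unfolding F_def by simp
  show ?thesis using P1 P2 P3 P4 P5 P6 P7 by blast
qed

end
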